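(* Let $\Theta=\begin{pmatrix} a&c\\ b&d\end{pmatrix}\in GL(2,\mathbb{Z})$ have no eigenvalue of absolute value $1$, and let $M$ be the mapping torus of the self-homeomorphism of the torus $T^2$ induced by $\Theta$ (a closed $\mathbb{S}ol^3$-manifold with $\pi=\pi_1(M)\cong\langle t,x,y\mid txt^{-1}=x^ay^b,\ tyt^{-1}=x^cy^d,\ xy=yx\rangle$). Let $\rho:\pi\to\mathbb{Z}/2\mathbb{Z}$ be the epimorphism with $\rho(t)=1$, $\rho(x)=\rho(y)=0$ (the unique epimorphism factoring through $\pi/\sqrt\pi\cong\mathbb{Z}$). Then $BU(M,\rho)=1$.
   Context: For a closed manifold $N$ and an epimorphism $\phi:\pi_1(N)\to\mathbb{Z}/2\mathbb{Z}$ (equivalently a nonzero class in $H^1(N;\mathbb{F}_2)$), let $N_\phi$ be the associated double cover with covering involution $t_\phi$. The Borsuk–Ulam index $BU(N,\phi)$ is the largest $k$ such that for every continuous map $f:N_\phi\to\mathbb{R}^k$ there is $x\in N_\phi$ with $f(x)=f(t_\phi(x))$. $\sqrt\pi$ denotes the unique maximal abelian normal subgroup of $\pi$ (here $\langle x,y\rangle\cong\mathbb{Z}^2$). *)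

theory Defs
  imports "HOL-Analysis.Analysis"
begin

definition BU_index :: "'a topology \<Rightarrow> ('a \<Rightarrow> 'a) \<Rightarrow> nat" where
  "BU_index X t = (GREATEST k. \<forall>f. continuous_map X (Euclidean_space k) f
        \<longrightarrow> (\<exists>x\<in>topspace X. f x = f (t x)))"

definition quot_top :: "('a::topological_space \<Rightarrow> 'a \<Rightarrow> bool) \<Rightarrow> 'a set topology" where
  "quot_top R = topology (\<lambda>U. U \<subseteq> UNIV // {(x,y). R x y} \<and> open (\<Union>U))"

definition Theta_map :: "int \<Rightarrow> int \<Rightarrow> int \<Rightarrow> int \<Rightarrow> real \<times> real \<Rightarrow> real \<times> real" where
  "Theta_map a b c d v = (of_int a * fst v + of_int c * snd v, of_int b * fst v + of_int d * snd v)"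

text \<open>Deck transformation t of the universal cover R^2 \<times> R of the mapping torus:
(v,s) \<mapsto> (Theta v, s+1).  x, y act by unit translations of R^2.\<close>
definition t_lift :: "int \<Rightarrow> int \<Rightarrow> int \<Rightarrow> int \<Rightarrow> (real \<times> real) \<times> real \<Rightarrow> (real \<times> real) \<times> real" where
  "t_lift a b c d p = (Theta_map a b c d (fst p), snd p + 1)"

definition ker_rho_gen :: "int \<Rightarrow> int \<Rightarrow> int \<Rightarrow> int \<Rightarrow> (real \<times> real) \<times> real \<Rightarrow> (real \<times> real) \<times> real \<Rightarrow> bool" where
  "ker_rho_gen a b c d p q \<longleftrightarrow>
     q = ((fst (fst p) + 1, snd (fst p)), snd p) \<or>
     q = ((fst (fst p), snd (fst p) + 1), snd p) \<or>
     q = t_lift a b c d (t_lift a b c d p)"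

text \<open>The double cover M_rho = (R^2 \<times> R) / ker rho, with ker rho = <x, y, t^2>.\<close>
definition M_rho :: "int \<Rightarrow> int \<Rightarrow> int \<Rightarrow> int \<Rightarrow> ((real \<times> real) \<times> real) set topology" where
  "M_rho a b c d = quot_top (equivclp (ker_rho_gen a b c d))"

definition t_rho :: "int \<Rightarrow> int \<Rightarrow> int \<Rightarrow> int \<Rightarrow> ((real \<times> real) \<times> real) set \<Rightarrow> ((real \<times> real) \<times> real) set" where
  "t_rho a b c d C = t_lift a b c d ` C"

end

theory Submission
  imports Defs
begin

lemma eqv_refl: "equivp E \<Longrightarrow> E x x"
  by (simp add: equivp_reflp_symp_transp reflpD)

lemma quot_istop:
  fixes E :: "'a::topological_space \<Rightarrow> 'a \<Rightarrow> bool"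
  assumes "equivp E"
  shows "istopology (\<lambda>U. U \<subseteq> UNIV // {(x,y). E x y} \<and> open (\<Union>U))"
proof -
  have eq: "equiv UNIV {(x,y). E x y}" using equivp_equiv[of "{(x,y). E x y}"] assms by simp
  show ?thesis unfolding istopology_def
  proof (rule conjI; intro allI impI)
    fix S T assume S: "S \<subseteq> UNIV // {(x,y). E x y} \<and> open (\<Union>S)"
      and T: "T \<subseteq> UNIV // {(x,y). E x y} \<and> open (\<Union>T)"
    have sub: "\<Union>S \<inter> \<Union>T \<subseteq> \<Union>(S \<inter> T)"
    proof
      fix x assume "x \<in> \<Union>S \<inter> \<Union>T"
      then obtain C D where "C \<in> S" "D \<in> T" "x \<in> C" "x \<in> D" by blast
      then have "C = D" using quotient_disj[OF eq, of C D] S T by blast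
      then show "x \<in> \<Union>(S \<inter> T)" using \<open>C \<in> S\<close> \<open>D \<in> T\<close> \<open>x \<in> C\<close> by blast
    qed
    have "\<Union>(S \<inter> T) = \<Union>S \<inter> \<Union>T" using sub by blast
    then show "S \<inter> T \<subseteq> UNIV // {(x, y). E x y} \<and> open (\<Union> (S \<inter> T))"
      using S T by (simp add: open_Int le_infI1)
  next
    fix K assume K: "\<forall>U\<in>K. U \<subseteq> UNIV // {(x, y). E x y} \<and> open (\<Union> U)"
    have "\<Union>(\<Union>K) = (\<Union>U\<in>K. \<Union>U)" by blast
    moreover have "open (\<Union>U\<in>K. \<Union>U)" using K by (intro open_UN) auto
    ultimately show "\<Union>K \<subseteq> UNIV // {(x, y). E x y} \<and> open (\<Union> (\<Union> K))"
      using K by auto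
  qed
qed

lemma openin_quot_top:
  assumes "equivp E"
  shows "openin (quot_top E) U \<longleftrightarrow> U \<subseteq> UNIV // {(x,y). E x y} \<and> open (\<Union>U)"
  unfolding quot_top_def using quot_istop[OF assms] by simp

lemma class_in_quot: "{q. E p q} \<in> UNIV // {(x,y). E x y}"
  unfolding quotient_def by auto

lemma quot_elem: "C \<in> UNIV // {(x,y). E x y} \<Longrightarrow> \<exists>p. C = {q. E p q}"
  unfolding quotient_def by auto

lemma topspace_quot_top:
  assumes "equivp E"
  shows "topspace (quot_top E) = UNIV // {(x,y). E x y}"
proof -
  have "\<Union>(UNIV // {(x,y). E x y}) = UNIV"
    using assms by (auto simp: quotient_def intro: eqv_refl)
  then have "openin (quot_top E) (UNIV // {(x,y). E x y})"
    by (simp add: openin_quot_top[OF assms])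
  moreover have "\<And>U. openin (quot_top E) U \<Longrightarrow> U \<subseteq> UNIV // {(x,y). E x y}"
    by (simp add: openin_quot_top[OF assms])
  ultimately show ?thesis unfolding topspace_def by blast
qed

lemma cls_cont:
  assumes "equivp E"
  shows "continuous_map euclidean (quot_top E) (\<lambda>p. {q. E p q})"
  unfolding continuous_map_def
proof (intro conjI allI impI)
  show "(\<lambda>p. {q. E p q}) \<in> topspace euclidean \<rightarrow> topspace (quot_top E)"
    by (auto simp: topspace_quot_top[OF assms] class_in_quot)
  fix U assume U: "openin (quot_top E) U"
  have "{x \<in> topspace euclidean. {q. E x q} \<in> U} = \<Union>U"
  proof safe
    fix x assume "{q. E x q} \<in> U"
    moreover have "x \<in> {q. E x q}" using assms by (simp add: eqv_refl)
    ultimately show "x \<in> \<Union>U" by blast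
  next
    fix x C assume "x \<in> C" "C \<in> U"
    then obtain p where C: "C = {q. E p q}" using U quot_elem by (auto simp: openin_quot_top[OF assms])
    then have "{q. E x q} = C" using \<open>x \<in> C\<close> assms
      by (auto, meson equivp_symp equivp_transp)+
    then show "{q. E x q} \<in> U" using \<open>C \<in> U\<close> by simp
  qed simp
  then show "openin euclidean {x \<in> topspace euclidean. {q. E x q} \<in> U}"
    using U by (simp add: openin_quot_top[OF assms])
qed

lemma desc_cont:
  fixes g :: "'a::topological_space \<Rightarrow> real"
  assumes "equivp E" "continuous_on UNIV g" "\<And>p q. E p q \<Longrightarrow> g p = g q"
  shows "continuous_map (quot_top E) euclideanreal (\<lambda>C. g (SOME p. p \<in> C))"
  unfolding continuous_map_def
proof (intro conjI allI impI)
  show "(\<lambda>C. g (SOME p. p \<in> C)) \<in> topspace (quot_top E) \<rightarrow> topspace euclideanreal" by simp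
  have key: "g (SOME p. p \<in> {q. E x q}) = g x" for x
  proof -
    have "x \<in> {q. E x q}" using assms(1) by (simp add: eqv_refl)
    then have "(SOME p. p \<in> {q. E x q}) \<in> {q. E x q}" by (rule someI)
    then show ?thesis using assms(3) by auto
  qed
  fix V :: "real set" assume V: "openin euclideanreal V"
  let ?S = "{C \<in> topspace (quot_top E). g (SOME p. p \<in> C) \<in> V}"
  have "\<Union>?S = g -` V"
  proof (intro equalityI subsetI)
    fix x assume "x \<in> \<Union>?S"
    then obtain C where "x \<in> C" "C \<in> topspace (quot_top E)" "g (SOME p. p \<in> C) \<in> V" by blast
    then obtain p where C: "C = {q. E p q}" using quot_elem by (auto simp: topspace_quot_top[OF assms(1)])
    then have "C = {q. E x q}" using \<open>x \<in> C\<close> assms(1)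
      by (auto, meson equivp_symp equivp_transp)+
    then show "x \<in> g -` V" using key \<open>g (SOME p. p \<in> C) \<in> V\<close> by simp
  next
    fix x assume "x \<in> g -` V"
    then have "g x \<in> V" by simp
    then have "{q. E x q} \<in> ?S" using key by (simp add: topspace_quot_top[OF assms(1)] class_in_quot)
    moreover have "x \<in> {q. E x q}" using assms(1) by (simp add: eqv_refl)
    ultimately show "x \<in> \<Union>?S" by blast
  qed
  moreover have "open (g -` V)" using V assms(2) open_vimage by auto
  ultimately show "openin (quot_top E) ?S"
    by (simp add: openin_quot_top[OF assms(1)] topspace_quot_top[OF assms(1)])
qed


definition tr :: "int \<Rightarrow> int \<Rightarrow> (real \<times> real) \<times> real \<Rightarrow> (real \<times> real) \<times> real" where
  "tr m n p = ((fst (fst p) + of_int m, snd (fst p) + of_int n), snd p)"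

lemma equivclp_map:
  assumes "equivclp R p q" "\<And>p q. R p q \<Longrightarrow> equivclp R (T p) (T q)"
  shows "equivclp R (T p) (T q)"
  using assms(1)
proof (induction rule: equivclp_induct)
  case base then show ?case by (simp add: eqv_refl)
next
  case (step y z)
  have "equivclp R (T y) (T z)"
    using step(2) assms(2) by (auto intro: equivclp_sym)
  then show ?case using step(3) by (meson transpD transp_equivclp)
qed

lemma tr_x: "equivclp (ker_rho_gen a b c d) p (tr m 0 p)"
proof (induction m arbitrary: p rule: int_induct[where k=0])
  case base then show ?case by (simp add: tr_def eqv_refl)
next
  case (step1 i)
  have "ker_rho_gen a b c d (tr i 0 p) (tr (i+1) 0 p)"
    unfolding ker_rho_gen_def tr_def by (simp add: add.assoc)
  then show ?case using step1(2)[of p]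
    by (meson r_into_equivclp transpD transp_equivclp)
next
  case (step2 i)
  have "ker_rho_gen a b c d (tr (i-1) 0 p) (tr i 0 p)"
    unfolding ker_rho_gen_def tr_def by simp
  then show ?case using step2(2)[of p]
    by (meson r_into_equivclp transpD transp_equivclp equivclp_sym)
qed

lemma tr_y: "equivclp (ker_rho_gen a b c d) p (tr 0 n p)"
proof (induction n arbitrary: p rule: int_induct[where k=0])
  case base then show ?case by (simp add: tr_def eqv_refl)
next
  case (step1 i)
  have "ker_rho_gen a b c d (tr 0 i p) (tr 0 (i+1) p)"
    unfolding ker_rho_gen_def tr_def by (simp add: add.assoc)
  then show ?case using step1(2)[of p]
    by (meson r_into_equivclp transpD transp_equivclp)
next
  case (step2 i)
  have "ker_rho_gen a b c d (tr 0 (i-1) p) (tr 0 i p)"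
    unfolding ker_rho_gen_def tr_def by simp
  then show ?case using step2(2)[of p]
    by (meson r_into_equivclp transpD transp_equivclp equivclp_sym)
qed

lemma tr_xy: "equivclp (ker_rho_gen a b c d) p (tr m n p)"
proof -
  have "tr m n p = tr 0 n (tr m 0 p)" by (simp add: tr_def)
  then show ?thesis using tr_x[of a b c d p m] tr_y[of a b c d "tr m 0 p" n]
    by (metis transpD transp_equivclp)
qed


lemma t_resp:
  assumes "equivclp (ker_rho_gen a b c d) p q"
  shows "equivclp (ker_rho_gen a b c d) (t_lift a b c d p) (t_lift a b c d q)"
proof (rule equivclp_map[OF assms])
  fix p q assume "ker_rho_gen a b c d p q"
  then consider "q = ((fst (fst p) + 1, snd (fst p)), snd p)"
    | "q = ((fst (fst p), snd (fst p) + 1), snd p)"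
    | "q = t_lift a b c d (t_lift a b c d p)" unfolding ker_rho_gen_def by blast
  then show "equivclp (ker_rho_gen a b c d) (t_lift a b c d p) (t_lift a b c d q)"
  proof cases
    case 1
    then have "t_lift a b c d q = tr a b (t_lift a b c d p)"
      by (simp add: t_lift_def Theta_map_def tr_def algebra_simps)
    then show ?thesis by (simp add: tr_xy)
  next
    case 2
    then have "t_lift a b c d q = tr c d (t_lift a b c d p)"
      by (simp add: t_lift_def Theta_map_def tr_def algebra_simps)
    then show ?thesis by (simp add: tr_xy)
  next
    case 3
    then show ?thesis by (simp add: ker_rho_gen_def r_into_equivclp)
  qed
qed

definition tinv :: "int \<Rightarrow> int \<Rightarrow> int \<Rightarrow> int \<Rightarrow> (real \<times> real) \<times> real \<Rightarrow> (real \<times> real) \<times> real" where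
  "tinv a b c d p = (Theta_map ((a*d-b*c)*d) (-(a*d-b*c)*b) (-(a*d-b*c)*c) ((a*d-b*c)*a) (fst p), snd p - 1)"

lemma det_sq:
  assumes "a * d - b * c = 1 \<or> a * d - b * c = -1"
  shows "(real_of_int a * of_int d - of_int b * of_int c) * (of_int a * of_int d - of_int b * of_int c) = 1"
proof -
  have "(a * d - b * c) * (a * d - b * c) = 1" using assms by auto
  then have "real_of_int ((a * d - b * c) * (a * d - b * c)) = 1" by simp
  then show ?thesis by simp
qed

lemma t_tinv:
  assumes "a * d - b * c = 1 \<or> a * d - b * c = -1"
  shows "t_lift a b c d (tinv a b c d p) = p"
proof -
  note h = det_sq[OF assms]
  obtain v1 v2 s where p: "p = ((v1, v2), s)" by (metis prod.collapse)
  let ?A = "real_of_int a" let ?B = "real_of_int b" let ?C = "real_of_int c" let ?D = "real_of_int d"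
  have e1: "?A * ((?A*?D - ?B*?C) * ?D * v1 + (-(?A*?D - ?B*?C) * ?C) * v2) + ?C * ((-(?A*?D - ?B*?C) * ?B) * v1 + ((?A*?D - ?B*?C) * ?A) * v2)
     = ((?A*?D - ?B*?C) * (?A*?D - ?B*?C)) * v1" by algebra
  have e2: "?B * ((?A*?D - ?B*?C) * ?D * v1 + (-(?A*?D - ?B*?C) * ?C) * v2) + ?D * ((-(?A*?D - ?B*?C) * ?B) * v1 + ((?A*?D - ?B*?C) * ?A) * v2)
     = ((?A*?D - ?B*?C) * (?A*?D - ?B*?C)) * v2" by algebra
  show ?thesis using e1 e2 h unfolding p t_lift_def tinv_def Theta_map_def by simp
qed

lemma tinv_t:
  assumes "a * d - b * c = 1 \<or> a * d - b * c = -1"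
  shows "tinv a b c d (t_lift a b c d p) = p"
proof -
  note h = det_sq[OF assms]
  obtain v1 v2 s where p: "p = ((v1, v2), s)" by (metis prod.collapse)
  let ?A = "real_of_int a" let ?B = "real_of_int b" let ?C = "real_of_int c" let ?D = "real_of_int d"
  have e1: "(?A*?D - ?B*?C) * ?D * (?A * v1 + ?C * v2) + (-(?A*?D - ?B*?C) * ?C) * (?B * v1 + ?D * v2)
     = ((?A*?D - ?B*?C) * (?A*?D - ?B*?C)) * v1" by algebra
  have e2: "(-(?A*?D - ?B*?C) * ?B) * (?A * v1 + ?C * v2) + ((?A*?D - ?B*?C) * ?A) * (?B * v1 + ?D * v2)
     = ((?A*?D - ?B*?C) * (?A*?D - ?B*?C)) * v2" by algebra
  show ?thesis using e1 e2 h unfolding p t_lift_def tinv_def Theta_map_def by simp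
qed

lemma tinv_resp:
  assumes det: "a * d - b * c = 1 \<or> a * d - b * c = -1"
    and "equivclp (ker_rho_gen a b c d) p q"
  shows "equivclp (ker_rho_gen a b c d) (tinv a b c d p) (tinv a b c d q)"
proof (rule equivclp_map[OF assms(2)])
  fix p q assume "ker_rho_gen a b c d p q"
  then consider "q = ((fst (fst p) + 1, snd (fst p)), snd p)"
    | "q = ((fst (fst p), snd (fst p) + 1), snd p)"
    | "q = t_lift a b c d (t_lift a b c d p)" unfolding ker_rho_gen_def by blast
  then show "equivclp (ker_rho_gen a b c d) (tinv a b c d p) (tinv a b c d q)"
  proof cases
    case 1
    then have "tinv a b c d q = tr ((a*d-b*c)*d) (-(a*d-b*c)*b) (tinv a b c d p)"
      by (simp add: tinv_def Theta_map_def tr_def algebra_simps)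
    then show ?thesis by (simp add: tr_xy)
  next
    case 2
    then have "tinv a b c d q = tr (-(a*d-b*c)*c) ((a*d-b*c)*a) (tinv a b c d p)"
      by (simp add: tinv_def Theta_map_def tr_def algebra_simps)
    then show ?thesis by (simp add: tr_xy)
  next
    case 3
    then have "tinv a b c d q = t_lift a b c d (t_lift a b c d (tinv a b c d p))"
      using tinv_t[OF det] t_tinv[OF det] by simp
    then show ?thesis by (simp add: ker_rho_gen_def r_into_equivclp)
  qed
qed

lemma t_cls:
  assumes det: "a * d - b * c = 1 \<or> a * d - b * c = -1"
  shows "t_lift a b c d ` {q. equivclp (ker_rho_gen a b c d) p q}
       = {q. equivclp (ker_rho_gen a b c d) (t_lift a b c d p) q}"
proof (intro equalityI subsetI)
  fix r assume "r \<in> t_lift a b c d ` {q. equivclp (ker_rho_gen a b c d) p q}"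
  then obtain q where "equivclp (ker_rho_gen a b c d) p q" "r = t_lift a b c d q" by blast
  then show "r \<in> {q. equivclp (ker_rho_gen a b c d) (t_lift a b c d p) q}"
    using t_resp[of a b c d p q] by simp
next
  fix r assume "r \<in> {q. equivclp (ker_rho_gen a b c d) (t_lift a b c d p) q}"
  then have "equivclp (ker_rho_gen a b c d) p (tinv a b c d r)"
    using tinv_resp[OF det, of "t_lift a b c d p" r] tinv_t[OF det] by simp
  moreover have "r = t_lift a b c d (tinv a b c d r)" using t_tinv[OF det] by simp
  ultimately show "r \<in> t_lift a b c d ` {q. equivclp (ker_rho_gen a b c d) p q}" by blast
qed

lemma snd_inv:
  assumes "equivclp (ker_rho_gen a b c d) p q"
  shows "\<exists>n::int. snd q = snd p + 2 * of_int n"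
  using assms
proof (induction rule: equivclp_induct)
  case base then show ?case by (intro exI[of _ 0]) simp
next
  case (step y z)
  then obtain n where n: "snd y = snd p + 2 * of_int n" by blast
  from step(2) have "snd z = snd y \<or> snd z = snd y + 2 \<or> snd y = snd z + 2"
    unfolding ker_rho_gen_def t_lift_def by auto
  then show ?case
  proof (elim disjE)
    assume "snd z = snd y" then show ?thesis using n by auto
  next
    assume "snd z = snd y + 2" then show ?thesis using n by (intro exI[of _ "n+1"]) (simp add: algebra_simps)
  next
    assume "snd y = snd z + 2" then show ?thesis using n by (intro exI[of _ "n-1"]) (simp add: algebra_simps)
  qed
qed


lemma some_cls:
  assumes "equivp E" "\<And>p q. E p q \<Longrightarrow> g p = g q"
  shows "g (SOME q. q \<in> {r. E p r}) = g p"
proof -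
  have "p \<in> {q. E p q}" using assms(1) by (simp add: eqv_refl)
  then have "(SOME q. q \<in> {r. E p r}) \<in> {q. E p q}" by (rule someI)
  then show ?thesis using assms(2) by auto
qed

lemma cls_eq:
  assumes "equivp E" "E p q"
  shows "{r. E p r} = {r. E q r}"
  using assms by (auto, meson equivp_symp equivp_transp)+

lemma cos_inv: "cos (pi * (s + 2 * of_int n)) = cos (pi * s)"
proof -
  have "pi * (s + 2 * of_int n) = pi * s + (2 * pi) * of_int n" by algebra
  then show ?thesis by (simp add: cos_add)
qed

lemma sin_inv: "sin (pi * (s + 2 * of_int n)) = sin (pi * s)"
proof -
  have "pi * (s + 2 * of_int n) = pi * s + (2 * pi) * of_int n" by algebra
  then show ?thesis by (simp add: sin_add)
qed

lemma cont_t: "continuous_on UNIV (t_lift a b c d)"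
  unfolding t_lift_def Theta_map_def by (intro continuous_intros)

theorem mainTheorem1:
  fixes a b c d :: int
  assumes "a * d - b * c = 1 \<or> a * d - b * c = -1"
    and "\<forall>e::complex. (\<exists>v1 v2. (v1, v2) \<noteq> (0, 0) \<and>
            of_int a * v1 + of_int c * v2 = e * v1 \<and>
            of_int b * v1 + of_int d * v2 = e * v2) \<longrightarrow> cmod e \<noteq> 1"
  shows "BU_index (M_rho a b c d) (t_rho a b c d) = 1"
proof -
  define E where "E = equivclp (ker_rho_gen a b c d)"
  define t where "t = t_lift a b c d"
  have eqv: "equivp E" unfolding E_def by simp
  have M: "M_rho a b c d = quot_top E" unfolding M_rho_def E_def ..
  have top: "topspace (quot_top E) = UNIV // {(x,y). E x y}" by (rule topspace_quot_top[OF eqv])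
  have tcls: "t_rho a b c d {q. E p q} = {q. E (t p) q}" for p
    unfolding t_rho_def E_def t_def by (rule t_cls[OF assms(1)])
  have Ett: "E p (t (t p))" for p
    unfolding E_def t_def by (simp add: ker_rho_gen_def r_into_equivclp)
  let ?P = "\<lambda>k. \<forall>f. continuous_map (M_rho a b c d) (Euclidean_space k) f
        \<longrightarrow> (\<exists>x\<in>topspace (M_rho a b c d). f x = f (t_rho a b c d x))"
  have P1: "?P 1"
  proof (intro allI impI)
    fix f assume cf: "continuous_map (M_rho a b c d) (Euclidean_space 1) f"
    then have cf': "continuous_map (quot_top E) (Euclidean_space 1) f" using M by simp
    have c0: "continuous_map (quot_top E) euclideanreal (\<lambda>x. f x 0)"
      using cf' unfolding Euclidean_space_def continuous_map_in_subtopology continuous_map_componentwise_UNIV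
      by blast
    define h where "h p = f {q. E p q} 0" for p
    have "continuous_map euclidean euclideanreal h"
      unfolding h_def using continuous_map_compose[OF cls_cont[OF eqv] c0] by (simp add: o_def)
    then have ch: "continuous_on UNIV h" by simp
    define G where "G p = h p - h (t p)" for p
    have cG: "continuous_on UNIV G" unfolding G_def t_def
      by (intro continuous_intros ch continuous_on_compose2[OF ch cont_t]) auto
    have htt: "h (t (t p)) = h p" for p
      unfolding h_def using cls_eq[OF eqv Ett[of p]] by simp
    have Gt: "G (t p) = - G p" for p unfolding G_def using htt by simp
    have conn: "connected (G ` UNIV)" by (rule connected_continuous_image[OF cG connected_UNIV])
    have "0 \<in> G ` UNIV"
    proof (cases "G 0 \<le> 0")
      case True
      then show ?thesis using conn Gt[of 0] unfolding connected_iff_interval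
        by (metis UNIV_I image_eqI neg_0_le_iff_le)
    next
      case False
      then show ?thesis using conn Gt[of 0] unfolding connected_iff_interval
        by (metis UNIV_I image_eqI neg_le_0_iff_le nle_le)
    qed
    then obtain p where Gp: "G p = 0" by auto
    define x where "x = {q. E p q}"
    have xt: "x \<in> topspace (quot_top E)" unfolding x_def top by (rule class_in_quot)
    have tx: "t_rho a b c d x = {q. E (t p) q}" unfolding x_def by (rule tcls)
    have tx_in: "t_rho a b c d x \<in> topspace (quot_top E)" unfolding tx top by (rule class_in_quot)
    have fx: "f x \<in> topspace (Euclidean_space 1)" using cf' xt by (auto simp: continuous_map_def)
    have ftx: "f (t_rho a b c d x) \<in> topspace (Euclidean_space 1)" using cf' tx_in by (auto simp: continuous_map_def)
    have "f x = f (t_rho a b c d x)"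
    proof
      fix i show "f x i = f (t_rho a b c d x) i"
      proof (cases "i = 0")
        case True then show ?thesis using Gp tx unfolding G_def h_def x_def by simp
      next
        case False then show ?thesis using fx ftx by (simp add: topspace_Euclidean_space)
      qed
    qed
    then show "\<exists>x\<in>topspace (M_rho a b c d). f x = f (t_rho a b c d x)" using xt M by auto
  qed
  have Pbound: "k \<le> 1" if Pk: "?P k" for k
  proof (rule ccontr)
    assume "\<not> k \<le> 1" then have k2: "k \<ge> 2" by simp
    define F where "F C i = (if i = 0 then cos (pi * snd (SOME p. p \<in> C))
        else if i = 1 then sin (pi * snd (SOME p. p \<in> C)) else 0)" for C :: "((real \<times> real) \<times> real) set" and i :: nat
    have invc: "cos (pi * snd p) = cos (pi * snd q)" if "E p q" for p q
      using snd_inv[of a b c d p q] that cos_inv unfolding E_def by metis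
    have invs: "sin (pi * snd p) = sin (pi * snd q)" if "E p q" for p q
      using snd_inv[of a b c d p q] that sin_inv unfolding E_def by metis
    have "continuous_map (quot_top E) (Euclidean_space k) (\<lambda>C i. if i < k then F C i else 0)"
      unfolding continuous_map_componentwise_Euclidean_space
    proof (intro allI impI)
      fix i assume "i < k"
      consider "i = 0" | "i = 1" | "i \<noteq> 0 \<and> i \<noteq> 1" by blast
      then show "continuous_map (quot_top E) euclideanreal (\<lambda>x. F x i)"
      proof cases
        case 1
        have "continuous_map (quot_top E) euclideanreal (\<lambda>C. (\<lambda>p. cos (pi * snd p)) (SOME p. p \<in> C))"
          by (rule desc_cont[OF eqv _ invc]) (intro continuous_intros)
        then show ?thesis using 1 unfolding F_def by simp
      next
        case 2
        have "continuous_map (quot_top E) euclideanreal (\<lambda>C. (\<lambda>p. sin (pi * snd p)) (SOME p. p \<in> C))"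
          by (rule desc_cont[OF eqv _ invs]) (intro continuous_intros)
        then show ?thesis using 2 unfolding F_def by simp
      next
        case 3 then show ?thesis unfolding F_def by simp
      qed
    qed
    moreover have "(\<lambda>C i. if i < k then F C i else 0) = F"
      using k2 by (auto simp: F_def fun_eq_iff)
    ultimately have "continuous_map (M_rho a b c d) (Euclidean_space k) F" using M by simp
    then obtain x where xt: "x \<in> topspace (M_rho a b c d)" and Fx: "F x = F (t_rho a b c d x)"
      using Pk by blast
    then have "x \<in> UNIV // {(x,y). E x y}" using M top by simp
    then obtain p where xp: "x = {q. E p q}" using quot_elem by blast
    have tx: "t_rho a b c d x = {q. E (t p) q}" unfolding xp by (rule tcls)
    have c1: "cos (pi * snd (SOME q. E p q)) = cos (pi * snd p)"
      using some_cls[OF eqv, of "\<lambda>p. cos (pi * snd p)"] invc by simp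
    have c2: "cos (pi * snd (SOME q. E (t p) q)) = cos (pi * snd (t p))"
      using some_cls[OF eqv, of "\<lambda>p. cos (pi * snd p)"] invc by simp
    have s1: "sin (pi * snd (SOME q. E p q)) = sin (pi * snd p)"
      using some_cls[OF eqv, of "\<lambda>p. sin (pi * snd p)"] invs by simp
    have s2: "sin (pi * snd (SOME q. E (t p) q)) = sin (pi * snd (t p))"
      using some_cls[OF eqv, of "\<lambda>p. sin (pi * snd p)"] invs by simp
    have st: "snd (t p) = snd p + 1" unfolding t_def t_lift_def by simp
    have Fx': "F {q. E p q} = F {q. E (t p) q}" using Fx tx xp by simp
    have "F {q. E p q} 0 = F {q. E (t p) q} 0" "F {q. E p q} 1 = F {q. E (t p) q} 1" using Fx' by auto
    moreover have "F {q. E p q} 0 = cos (pi * snd p)" unfolding F_def mem_Collect_eq using c1 by simp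
    moreover have "F {q. E (t p) q} 0 = cos (pi * (snd p + 1))" unfolding F_def mem_Collect_eq using c2 st by simp
    moreover have "F {q. E p q} 1 = sin (pi * snd p)" unfolding F_def mem_Collect_eq using s1 by simp
    moreover have "F {q. E (t p) q} 1 = sin (pi * (snd p + 1))" unfolding F_def mem_Collect_eq using s2 st by simp
    ultimately have "cos (pi * snd p) = cos (pi * (snd p + 1))" "sin (pi * snd p) = sin (pi * (snd p + 1))"
      by simp_all
    then have "cos (pi * snd p) = - cos (pi * snd p)" "sin (pi * snd p) = - sin (pi * snd p)"
      by (simp_all add: distrib_left cos_periodic_pi sin_periodic_pi)
    then have "cos (pi * snd p) = 0" "sin (pi * snd p) = 0" by simp_all
    then show False using sin_cos_squared_add[of "pi * snd p"] by simp
  qed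
  show ?thesis unfolding BU_index_def
    by (rule Greatest_equality) (use P1 Pbound in auto)
qed

end
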